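(* Let $\gamma_0,\gamma_1,\gamma_2,\gamma_3$ be $4\times4$ Dirac matrices, let $m$ be a constant, and define the $4\times 4$ matrices \[ J_1=\tfrac12\gamma_0,\quad J_2=\tfrac{i}{2}\gamma_3,\quad J_3=\tfrac{i}{2}\gamma_3\gamma_0 . \] Let $V(x)$ be a smooth function satisfying, for some fixed $N\in\mathbf{N}$ and constants $C_0,\ldots,C_N$ not all zero, the higher stationary mKdV equation \[ \sum_{k=0}^{N} C_k S_k=0,\qquad S_k=\mathcal{Y}^k V', \] where $\mathcal{Y}=D_x^2+V^2+V_xD_x^{-1}V$, $D_x=\frac{d}{dx}$, and $D_x^{-1}$ denotes the inverse of $D_x$ (integration in $x$). Then the system of ODEs \[ \big(D_x-V(x)J_3-mJ_2\big)\varphi=0 \] for a four-component complex-valued function $\varphi(x)$ is integrable by quadratures.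
   Context: Dirac matrices are $4\times4$ matrices satisfying $\gamma_\mu\gamma_\nu+\gamma_\nu\gamma_\mu=2g_{\mu\nu}I$ with $g=\mathrm{diag}(1,-1,-1,-1)$. In the operator $\mathcal{Y}=D_x^2+V^2+V_xD_x^{-1}V$, the term $V_xD_x^{-1}V$ acts on a function $u$ as $V_x\cdot D_x^{-1}(Vu)$; $\mathcal{Y}$ is the recursion operator of the mKdV equation $V_t+V_{xxx}+\tfrac32V^2V_x=0$, and $S_k=\mathcal{Y}^kV'$ are its higher symmetries; for $N=1$ the equation reduces to $C_1(V'''+\tfrac32V^2V')+C_0'V'=0$ type stationary mKdV. "Integrable by quadratures" means that the general solution can be obtained by a finite sequence of algebraic operations, integrations of known functions, and compositions/exponentiations of known functions. *)

theory Defs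
  imports "HOL-Analysis.Analysis"
begin

definition minkowski :: "nat \<Rightarrow> nat \<Rightarrow> complex" where
  "minkowski \<mu> \<nu> = (if \<mu> = \<nu> then (if \<mu> = 0 then 1 else -1) else 0)"

definition dirac_matrices :: "(nat \<Rightarrow> complex^4^4) \<Rightarrow> bool" where
  "dirac_matrices \<gamma> \<longleftrightarrow>
     (\<forall>\<mu><4. \<forall>\<nu><4. \<gamma> \<mu> ** \<gamma> \<nu> + \<gamma> \<nu> ** \<gamma> \<mu> = mat (2 * minkowski \<mu> \<nu>))"

definition J1 :: "(nat \<Rightarrow> complex^4^4) \<Rightarrow> complex^4^4" where
  "J1 \<gamma> = mat (1/2) ** \<gamma> 0"
definition J2 :: "(nat \<Rightarrow> complex^4^4) \<Rightarrow> complex^4^4" where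
  "J2 \<gamma> = mat (\<i>/2) ** \<gamma> 3"
definition J3 :: "(nat \<Rightarrow> complex^4^4) \<Rightarrow> complex^4^4" where
  "J3 \<gamma> = mat (\<i>/2) ** \<gamma> 3 ** \<gamma> 0"

text \<open>Higher symmetries S_k = Y^k V' of mKdV, where Y = D^2 + V^2 + V_x D^{-1} V.
  D^{-1} is integration, determined up to an additive constant; at each step some
  antiderivative W_k of V*S_k is chosen:
  S_0 = V',  S_{k+1} = S_k'' + V^2 S_k + V' W_k  with  W_k' = V S_k.\<close>
definition mkdv_symmetries :: "(real \<Rightarrow> real) \<Rightarrow> (nat \<Rightarrow> real \<Rightarrow> real) \<Rightarrow> bool" where
  "mkdv_symmetries V S \<longleftrightarrow>
     S 0 = deriv V \<and>
     (\<forall>k. \<exists>W. (\<forall>x. (W has_real_derivative (V x * S k x)) (at x)) \<and>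
              S (Suc k) = (\<lambda>x. deriv (deriv (S k)) x + (V x)^2 * S k x + deriv V x * W x))"

text \<open>Functions obtainable by quadratures on the set I from the known data:
  complex constants, the variable x, the potential V; closed under field operations,
  differentiation, integration, exponentiation, and (continuous branches of) algebraic
  functions over the class.\<close>
inductive quad :: "(real \<Rightarrow> real) \<Rightarrow> real set \<Rightarrow> (real \<Rightarrow> complex) \<Rightarrow> bool"
  for V :: "real \<Rightarrow> real" and I :: "real set" where
  q_const: "quad V I (\<lambda>x. c)"
| q_var: "quad V I (\<lambda>x. complex_of_real x)"
| q_V: "quad V I (\<lambda>x. complex_of_real (V x))"
| q_cong: "quad V I f \<Longrightarrow> (\<forall>x\<in>I. g x = f x) \<Longrightarrow> quad V I g"
| q_add: "quad V I f \<Longrightarrow> quad V I g \<Longrightarrow> quad V I (\<lambda>x. f x + g x)"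
| q_mult: "quad V I f \<Longrightarrow> quad V I g \<Longrightarrow> quad V I (\<lambda>x. f x * g x)"
| q_inv: "quad V I f \<Longrightarrow> (\<forall>x\<in>I. f x \<noteq> 0) \<Longrightarrow> quad V I (\<lambda>x. inverse (f x))"
| q_deriv: "quad V I f \<Longrightarrow> (\<forall>x\<in>I. (f has_vector_derivative g x) (at x)) \<Longrightarrow> quad V I g"
| q_integral: "quad V I f \<Longrightarrow> (\<forall>x\<in>I. (g has_vector_derivative f x) (at x)) \<Longrightarrow> quad V I g"
| q_exp: "quad V I f \<Longrightarrow> quad V I (\<lambda>x. exp (f x))"
| q_alg: "(\<forall>k<length cs. quad V I (cs ! k)) \<Longrightarrow> length cs \<ge> 2 \<Longrightarrow>
          (\<forall>x\<in>I. last cs x \<noteq> 0) \<Longrightarrow> continuous_on I g \<Longrightarrow>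
          (\<forall>x\<in>I. (\<Sum>k<length cs. (cs ! k) x * g x ^ k) = 0) \<Longrightarrow> quad V I g"

definition integrable_by_quadratures ::
    "(real \<Rightarrow> real) \<Rightarrow> (real \<Rightarrow> complex^4^4) \<Rightarrow> bool" where
  "integrable_by_quadratures V A \<longleftrightarrow>
     (\<forall>a b. a < b \<longrightarrow> (\<exists>c d. a \<le> c \<and> c < d \<and> d \<le> b \<and>
        (\<exists>\<Phi> :: real \<Rightarrow> complex^4^4.
           (\<forall>i j. quad V {c<..<d} (\<lambda>x. \<Phi> x $ i $ j)) \<and>
           (\<forall>x\<in>{c<..<d}. (\<Phi> has_vector_derivative (A x ** \<Phi> x)) (at x) \<and> det (\<Phi> x) \<noteq> 0))))"

end

theory Submission
  imports Defs
begin

lemma mat_mult_entry: "(mat a ** X) $ i $ j = a * (X $ i $ j :: 'a::comm_semiring_1)"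
  unfolding matrix_matrix_mult_def mat_def
  by (simp add: if_distrib if_distribR sum.delta cong: if_cong)

lemma mm_entry: "(A ** B) $ i $ j = (\<Sum>k\<in>UNIV. A $ i $ k * B $ k $ j)"
  by (simp add: matrix_matrix_mult_def)

lemma mat_entry: "(mat a :: 'a::zero^'n^'n) $ i $ j = (if i = j then a else 0)"
  by (simp add: mat_def)

lemma mat_mat: "mat a ** (mat b ** X) = mat (a * b) ** (X :: 'a::comm_semiring_1^'n^'n)"
  by (simp add: vec_eq_iff mat_mult_entry mult.assoc)

lemma mat_right: "X ** (mat b ** Y) = mat b ** (X ** (Y :: 'a::comm_semiring_1^'n^'n))"
proof -
  have "(X ** (mat b ** Y)) $ i $ j = (mat b ** (X ** Y)) $ i $ j" for i j
    by (simp only: mm_entry[of X] mm_entry[of X Y] mat_mult_entry sum_distrib_left mult_ac)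
  then show ?thesis by (simp add: vec_eq_iff)
qed

lemma mat_comm_assoc: "(mat a ** X) ** (mat b ** Y) = mat (a * b) ** (X ** (Y :: 'a::comm_semiring_1^'n^'n))"
  by (metis mat_right mat_mat matrix_mul_assoc)

lemma mat_add_mult: "mat a ** X + mat b ** X = mat (a + b) ** (X :: 'a::comm_semiring_1^'n^'n)"
  by (simp add: vec_eq_iff mat_mult_entry algebra_simps)

lemma dirac_basic:
  assumes "dirac_matrices \<gamma>"
  shows "\<gamma> 0 ** \<gamma> 0 = mat 1" "\<gamma> 3 ** \<gamma> 3 = mat (-1)" "\<gamma> 0 ** \<gamma> 3 = mat (-1) ** (\<gamma> 3 ** \<gamma> 0)"
proof -
  have h: "\<And>\<mu> \<nu>. \<mu> < 4 \<Longrightarrow> \<nu> < 4 \<Longrightarrow> \<gamma> \<mu> ** \<gamma> \<nu> + \<gamma> \<nu> ** \<gamma> \<mu> = mat (2 * minkowski \<mu> \<nu>)"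
    using assms unfolding dirac_matrices_def by blast
  have a: "\<gamma> 0 ** \<gamma> 0 + \<gamma> 0 ** \<gamma> 0 = mat 2" using h[of 0 0] by (simp add: minkowski_def)
  have b: "\<gamma> 3 ** \<gamma> 3 + \<gamma> 3 ** \<gamma> 3 = mat (-2)" using h[of 3 3] by (simp add: minkowski_def)
  have c: "\<gamma> 0 ** \<gamma> 3 + \<gamma> 3 ** \<gamma> 0 = mat 0" using h[of 0 3] by (simp add: minkowski_def)
  show "\<gamma> 0 ** \<gamma> 0 = mat 1"
  proof -
    have "\<And>i j. 2 * (\<gamma> 0 ** \<gamma> 0) $ i $ j = 2 * (mat 1 :: complex^4^4) $ i $ j"
      using a by (simp add: vec_eq_iff mat_entry)
    then show ?thesis by (simp add: vec_eq_iff)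
  qed
  show "\<gamma> 3 ** \<gamma> 3 = mat (-1)"
  proof -
    have "\<And>i j. 2 * (\<gamma> 3 ** \<gamma> 3) $ i $ j = 2 * (mat (-1) :: complex^4^4) $ i $ j"
      using b by (simp add: vec_eq_iff mat_entry)
    then show ?thesis by (simp add: vec_eq_iff)
  qed
  show "\<gamma> 0 ** \<gamma> 3 = mat (-1) ** (\<gamma> 3 ** \<gamma> 0)"
  proof -
    have "\<And>i j. (\<gamma> 0 ** \<gamma> 3) $ i $ j + (\<gamma> 3 ** \<gamma> 0) $ i $ j = 0"
      using c by (simp add: vec_eq_iff)
    then show ?thesis by (simp add: vec_eq_iff mat_mult_entry add_eq_0_iff)
  qed
qed

lemma matrix_add_rdistrib: "((B + C) ** A) = (B ** A) + (C ** (A :: 'a::comm_semiring_1^'n^'n))"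
  by (simp add: vec_eq_iff mm_entry sum.distrib[symmetric] algebra_simps)

lemma dirac_table:
  assumes "dirac_matrices \<gamma>"
  defines "A \<equiv> \<gamma> 0" and "B \<equiv> \<gamma> 3" and "C \<equiv> \<gamma> 3 ** \<gamma> 0"
  shows "A ** A = mat 1" "B ** B = mat (-1)" "A ** B = mat (-1) ** C" "B ** A = C"
    "A ** C = mat (-1) ** B" "C ** A = B" "B ** C = mat (-1) ** A" "C ** B = A" "C ** C = mat 1"
proof -
  note d = dirac_basic[OF assms(1)]
  show 1: "A ** A = mat 1" "B ** B = mat (-1)" "A ** B = mat (-1) ** C" "B ** A = C"
    using d by (auto simp: C_def A_def B_def)
  have 2: "C ** A = B"
  proof -
    have "C ** A = B ** (A ** A)" by (simp add: C_def A_def B_def matrix_mul_assoc)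
    then show ?thesis by (simp add: 1(1))
  qed
  show "C ** A = B" by (fact 2)
  show "A ** C = mat (-1) ** B"
  proof -
    have "A ** C = (A ** B) ** A" by (simp add: C_def A_def B_def matrix_mul_assoc)
    also have "\<dots> = mat (-1) ** (C ** A)" by (simp add: 1(3) matrix_mul_assoc)
    finally show ?thesis by (simp add: 2)
  qed
  have 4: "B ** C = mat (-1) ** A"
  proof -
    have "B ** C = (B ** B) ** A" by (simp add: C_def A_def B_def matrix_mul_assoc)
    then show ?thesis by (simp add: 1(2))
  qed
  show "B ** C = mat (-1) ** A" by (fact 4)
  have 5: "C ** B = A"
  proof -
    have "C ** B = B ** (A ** B)" by (simp add: C_def A_def B_def matrix_mul_assoc)
    also have "\<dots> = mat (-1) ** (B ** C)" by (simp add: 1(3) mat_right)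
    also have "\<dots> = A" by (simp add: 4 mat_mat)
    finally show ?thesis .
  qed
  show "C ** B = A" by (fact 5)
  show "C ** C = mat 1"
  proof -
    have "C ** C = (C ** B) ** A" by (simp add: C_def A_def B_def matrix_mul_assoc)
    then show ?thesis by (simp add: 5 1(1))
  qed
qed

definition emb :: "(nat \<Rightarrow> complex^4^4) \<Rightarrow> complex \<Rightarrow> complex \<Rightarrow> complex \<Rightarrow> complex \<Rightarrow> complex^4^4" where
  "emb \<gamma> w x y z = mat w ** mat 1 + mat x ** \<gamma> 0 + mat y ** \<gamma> 3 + mat z ** (\<gamma> 3 ** \<gamma> 0)"

lemma emb_mult:
  assumes "dirac_matrices \<gamma>"
  shows "emb \<gamma> w x y z ** emb \<gamma> w' x' y' z' =
    emb \<gamma> (w*w' + x*x' - y*y' + z*z') (w*x' + x*w' - y*z' + z*y') (w*y' + y*w' - x*z' + z*x') (w*z' + z*w' - x*y' + y*x')"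
proof -
  note t = dirac_table[OF assms, unfolded atomize_eq[symmetric]]
  show ?thesis
    unfolding emb_def
    apply (simp only: matrix_add_ldistrib matrix_add_rdistrib mat_comm_assoc t(1-3) t(5-9))
    apply (simp only: matrix_mul_lid matrix_mul_rid mat_mat)
    apply (simp only: vec_eq_iff mat_mult_entry mat_entry vector_add_component)
    apply (intro allI)
    apply (simp add: algebra_simps)
    done
qed

lemma mat_mat2: "mat a ** mat b = (mat (a * b) :: 'a::comm_semiring_1^'n^'n)"
  by (simp add: vec_eq_iff mat_mult_entry mat_entry)

lemma emb_entry: "emb \<gamma> w x y z $ i $ j = w * (if i = j then 1 else 0) + x * \<gamma> 0 $ i $ j + y * \<gamma> 3 $ i $ j + z * (\<gamma> 3 ** \<gamma> 0) $ i $ j"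
  by (simp add: emb_def mat_mult_entry mat_entry)

lemma scaleR_mat: "r *\<^sub>R (X :: complex^'n^'n) = mat (complex_of_real r) ** X"
  unfolding vec_eq_iff mat_mult_entry vector_scaleR_component by (simp add: scaleR_conv_of_real)

lemma A_emb:
  "V *\<^sub>R J3 \<gamma> + m *\<^sub>R J2 \<gamma> = emb \<gamma> 0 0 (\<i> * complex_of_real m / 2) (\<i> * complex_of_real V / 2)"
  unfolding J3_def J2_def emb_def scaleR_mat
  by (simp add: mat_mat matrix_mul_assoc[symmetric] mult.commute add.commute)

lemma bl_mat: "bounded_linear (\<lambda>c::complex. mat c ** (X :: complex^'n^'n))"
proof -
  have "linear (\<lambda>c::complex. mat c ** (X :: complex^'n^'n))"
    by (rule linearI) (simp_all only: vec_eq_iff mat_mult_entry vector_scaleR_component vector_add_component, simp_all add: algebra_simps scaleR_conv_of_real)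
  then show ?thesis using linear_conv_bounded_linear by blast
qed

lemma emb_deriv:
  assumes "(w has_vector_derivative w') F" "(x has_vector_derivative x') F"
    "(y has_vector_derivative y') F" "(z has_vector_derivative z') F"
  shows "((\<lambda>t. emb \<gamma> (w t) (x t) (y t) (z t)) has_vector_derivative emb \<gamma> w' x' y' z') F"
  unfolding emb_def
  by (intro has_vector_derivative_add bounded_linear.has_vector_derivative[OF bl_mat] assms)

lemma det_emb:
  assumes "dirac_matrices \<gamma>" "w*w - x*x + y*y - z*z \<noteq> 0"
  shows "det (emb \<gamma> w x y z) \<noteq> 0"
proof -
  let ?n = "w*w - x*x + y*y - z*z"
  have "emb \<gamma> w x y z ** emb \<gamma> w (-x) (-y) (-z) = emb \<gamma> ?n 0 0 0"
    by (simp add: emb_mult[OF assms(1)] algebra_simps)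
  also have "\<dots> = mat ?n" by (simp add: emb_def)
  finally have "emb \<gamma> w x y z ** (mat (1/?n) ** emb \<gamma> w (-x) (-y) (-z)) = mat 1"
    using assms(2) by (simp add: mat_right mat_mat mat_mat2)
  then have "invertible (emb \<gamma> w x y z)"
    using invertible_right_inverse by blast
  then show ?thesis using invertible_det_nz by blast
qed


lemma quad_lin4:
  assumes "quad V J f1" "quad V J f2" "quad V J f3" "quad V J f4"
  shows "quad V J (\<lambda>x. f1 x * c1 + f2 x * c2 + f3 x * c3 + f4 x * c4)"
  by (intro q_add q_mult q_const assms)

lemma emb_cong: "w = w' \<Longrightarrow> x = x' \<Longrightarrow> y = y' \<Longrightarrow> z = z' \<Longrightarrow> emb \<gamma> w x y z = emb \<gamma> w' x' y' z'"
  by simp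

lemma core:
  fixes p q r s :: "real \<Rightarrow> complex" and V :: "real \<Rightarrow> real" and m :: real
  assumes dir: "dirac_matrices \<gamma>"
   and dp: "\<And>x. x \<in> J \<Longrightarrow> (p has_vector_derivative ((of_real m * r x - of_real (V x) * s x)/4)) (at x)"
   and dq: "\<And>x. x \<in> J \<Longrightarrow> (q has_vector_derivative ((of_real m * s x - of_real (V x) * r x)/2)) (at x)"
   and dr: "\<And>x. x \<in> J \<Longrightarrow> (r has_vector_derivative (of_real m * p x + of_real (V x) * q x / 2)) (at x)"
   and ds: "\<And>x. x \<in> J \<Longrightarrow> (s has_vector_derivative (of_real (V x) * p x + of_real m * q x / 2)) (at x)"
   and nz: "\<And>x. x \<in> J \<Longrightarrow> p x * p x - (q x * q x + r x * r x - s x * s x)/4 \<noteq> 0"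
   and qp: "quad V J p" and qq: "quad V J q" and qr: "quad V J r" and qs: "quad V J s"
  shows "\<exists>\<Phi>. (\<forall>i j. quad V J (\<lambda>x. \<Phi> x $ i $ j)) \<and>
    (\<forall>x\<in>J. (\<Phi> has_vector_derivative ((V x *\<^sub>R J3 \<gamma> + m *\<^sub>R J2 \<gamma>) ** \<Phi> x)) (at x) \<and> det (\<Phi> x) \<noteq> 0)"
proof (intro exI conjI allI ballI)
  define \<Phi> where "\<Phi> = (\<lambda>x. emb \<gamma> (p x) (q x / 2) (\<i> * r x / 2) (\<i> * s x / 2))"
  show "quad V J (\<lambda>x. \<Phi> x $ i $ j)" for i j
  proof -
    have "quad V J (\<lambda>x. p x * (if i = j then 1 else 0) + q x * (\<gamma> 0 $ i $ j / 2) + r x * (\<i> * \<gamma> 3 $ i $ j / 2)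
       + s x * (\<i> * (\<gamma> 3 ** \<gamma> 0) $ i $ j / 2))"
      by (rule quad_lin4[OF qp qq qr qs])
    then show ?thesis
      by (rule q_cong) (simp add: \<Phi>_def emb_entry mult_ac)
  qed
  fix x assume x: "x \<in> J"
  show "det (\<Phi> x) \<noteq> 0" unfolding \<Phi>_def
  proof (rule det_emb[OF dir])
    have eq: "p x * p x - q x / 2 * (q x / 2) + \<i> * r x / 2 * (\<i> * r x / 2) - \<i> * s x / 2 * (\<i> * s x / 2)
      = p x * p x - (q x * q x + r x * r x - s x * s x)/4"
      by (simp add: field_simps)
    show "p x * p x - q x / 2 * (q x / 2) + \<i> * r x / 2 * (\<i> * r x / 2) - \<i> * s x / 2 * (\<i> * s x / 2) \<noteq> 0"
      unfolding eq by (rule nz[OF x])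
  qed
  have "(\<Phi> has_vector_derivative emb \<gamma> ((of_real m * r x - of_real (V x) * s x)/4) ((of_real m * s x - of_real (V x) * r x)/2 / 2)
       (\<i> * (of_real m * p x + of_real (V x) * q x / 2) / 2) (\<i> * (of_real (V x) * p x + of_real m * q x / 2) / 2)) (at x)"
    unfolding \<Phi>_def
    by (intro emb_deriv dp[OF x] has_vector_derivative_divide has_vector_derivative_mult_right dq[OF x] dr[OF x] ds[OF x])
  moreover have "(V x *\<^sub>R J3 \<gamma> + m *\<^sub>R J2 \<gamma>) ** \<Phi> x = emb \<gamma> ((of_real m * r x - of_real (V x) * s x)/4) ((of_real m * s x - of_real (V x) * r x)/2 / 2)
       (\<i> * (of_real m * p x + of_real (V x) * q x / 2) / 2) (\<i> * (of_real (V x) * p x + of_real m * q x / 2) / 2)"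
    unfolding A_emb \<Phi>_def emb_mult[OF dir]
    by (rule emb_cong; simp add: field_simps)
  ultimately show "(\<Phi> has_vector_derivative ((V x *\<^sub>R J3 \<gamma> + m *\<^sub>R J2 \<gamma>) ** \<Phi> x)) (at x)"
    by simp
qed


lemma vd_eq: "(f has_vector_derivative D') F \<Longrightarrow> D' = D \<Longrightarrow> (f has_vector_derivative D) F"
  by simp

lemma vd_exp:
  fixes g :: "real \<Rightarrow> complex"
  assumes "(g has_vector_derivative g') (at x)"
  shows "((\<lambda>x. exp (g x)) has_vector_derivative (g' * exp (g x))) (at x)"
  using field_vector_diff_chain_at[OF assms DERIV_exp] by (simp add: o_def)

lemma vd_inverse:
  fixes g :: "real \<Rightarrow> complex"
  assumes "(g has_vector_derivative g') (at x)" "g x \<noteq> 0"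
  shows "((\<lambda>x. inverse (g x)) has_vector_derivative (- g' / (g x * g x))) (at x)"
proof -
  have "(inverse has_field_derivative - (inverse (g x) ^ 2)) (at (g x))"
    using DERIV_inverse[OF assms(2)] by (simp add: power2_eq_square)
  from field_vector_diff_chain_at[OF assms(1) this] show ?thesis
    using assms(2) by (simp add: o_def field_simps power2_eq_square)
qed

lemma core2:
  fixes pa pb qa qb :: "real \<Rightarrow> complex" and V :: "real \<Rightarrow> real" and m :: real
  assumes dir: "dirac_matrices \<gamma>"
   and du1: "\<And>x. x \<in> J \<Longrightarrow> (pa has_vector_derivative ((of_real m * pa x + of_real (V x) * pb x)/2)) (at x)"
   and du2: "\<And>x. x \<in> J \<Longrightarrow> (pb has_vector_derivative ((- of_real (V x) * pa x - of_real m * pb x)/2)) (at x)"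
   and dw1: "\<And>x. x \<in> J \<Longrightarrow> (qa has_vector_derivative ((of_real m * qa x + of_real (V x) * qb x)/2)) (at x)"
   and dw2: "\<And>x. x \<in> J \<Longrightarrow> (qb has_vector_derivative ((- of_real (V x) * qa x - of_real m * qb x)/2)) (at x)"
   and nz: "\<And>x. x \<in> J \<Longrightarrow> pa x * qb x - qa x * pb x \<noteq> 0"
   and h1: "quad V J pa" and h2: "quad V J pb" and h3: "quad V J qa" and h4: "quad V J qb"
  shows "\<exists>\<Phi>. (\<forall>i j. quad V J (\<lambda>x. \<Phi> x $ i $ j)) \<and>
    (\<forall>x\<in>J. (\<Phi> has_vector_derivative ((V x *\<^sub>R J3 \<gamma> + m *\<^sub>R J2 \<gamma>) ** \<Phi> x)) (at x) \<and> det (\<Phi> x) \<noteq> 0)"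
proof (rule core[OF dir, where p="\<lambda>x. (pa x + qb x) / 2" and q="\<lambda>x. pb x + qa x" and r="\<lambda>x. pa x - qb x" and s="\<lambda>x. qa x - pb x"])
  fix x assume x: "x \<in> J"
  show "((\<lambda>x. (pa x + qb x) / 2) has_vector_derivative (of_real m * (pa x - qb x) - of_real (V x) * (qa x - pb x)) / 4) (at x)"
    by (rule vd_eq[OF has_vector_derivative_divide[OF has_vector_derivative_add[OF du1[OF x] dw2[OF x]]]]) (simp add: field_simps)
  show "((\<lambda>x. pb x + qa x) has_vector_derivative (of_real m * (qa x - pb x) - of_real (V x) * (pa x - qb x)) / 2) (at x)"
    by (rule vd_eq[OF has_vector_derivative_add[OF du2[OF x] dw1[OF x]]]) (simp add: field_simps)
  show "((\<lambda>x. pa x - qb x) has_vector_derivative of_real m * ((pa x + qb x) / 2) + of_real (V x) * (pb x + qa x) / 2) (at x)"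
    by (rule vd_eq[OF has_vector_derivative_diff[OF du1[OF x] dw2[OF x]]]) (simp add: field_simps)
  show "((\<lambda>x. qa x - pb x) has_vector_derivative of_real (V x) * ((pa x + qb x) / 2) + of_real m * (pb x + qa x) / 2) (at x)"
    by (rule vd_eq[OF has_vector_derivative_diff[OF dw1[OF x] du2[OF x]]]) (simp add: field_simps)
  have "(pa x + qb x) / 2 * ((pa x + qb x) / 2) - ((pb x + qa x) * (pb x + qa x) + (pa x - qb x) * (pa x - qb x) - (qa x - pb x) * (qa x - pb x)) / 4
     = pa x * qb x - qa x * pb x" by (simp add: field_simps)
  then show "(pa x + qb x) / 2 * ((pa x + qb x) / 2) - ((pb x + qa x) * (pb x + qa x) + (pa x - qb x) * (pa x - qb x) - (qa x - pb x) * (qa x - pb x)) / 4 \<noteq> 0"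
    using nz[OF x] by simp
next
  show "quad V J (\<lambda>x. (pa x + qb x) / 2)"
    by (rule q_cong[where f="\<lambda>x. (pa x + qb x) * (1/2)"]) (intro q_mult q_add q_const h1 h4, simp)
  show "quad V J (\<lambda>x. pb x + qa x)" by (intro q_add h2 h3)
  show "quad V J (\<lambda>x. pa x - qb x)"
    by (rule q_cong[where f="\<lambda>x. pa x + qb x * (-1)"]) (intro q_mult q_add q_const h1 h4, simp)
  show "quad V J (\<lambda>x. qa x - pb x)"
    by (rule q_cong[where f="\<lambda>x. qa x + pb x * (-1)"]) (intro q_mult q_add q_const h3 h2, simp)
qed


lemma const_case:
  fixes \<Theta> f :: "real \<Rightarrow> complex" and V :: "real \<Rightarrow> real" and m :: real and \<alpha> \<beta> :: complex
  assumes dir: "dirac_matrices \<gamma>"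
   and dT: "\<And>x. x \<in> J \<Longrightarrow> (\<Theta> has_vector_derivative f x) (at x)"
   and qT: "quad V J \<Theta>"
   and hm: "\<And>x. x \<in> J \<Longrightarrow> of_real m = f x * \<alpha>"
   and hV: "\<And>x. x \<in> J \<Longrightarrow> of_real (V x) = f x * \<beta>"
  shows "\<exists>\<Phi>. (\<forall>i j. quad V J (\<lambda>x. \<Phi> x $ i $ j)) \<and>
    (\<forall>x\<in>J. (\<Phi> has_vector_derivative ((V x *\<^sub>R J3 \<gamma> + m *\<^sub>R J2 \<gamma>) ** \<Phi> x)) (at x) \<and> det (\<Phi> x) \<noteq> 0)"
proof -
  define \<omega> where "\<omega> = csqrt ((\<alpha>*\<alpha> - \<beta>*\<beta>)/4)"
  have om: "\<alpha>*\<alpha> - \<beta>*\<beta> = 4*(\<omega>*\<omega>)"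
    unfolding \<omega>_def by (simp add: power2_eq_square[symmetric])
  show ?thesis
  proof (cases "\<omega> = 0")
    case True
    then have ab: "\<alpha>*\<alpha> - \<beta>*\<beta> = 0" using om by simp
    show ?thesis
    proof (rule core[OF dir, where p="\<lambda>x. 1" and q="\<lambda>x. 0" and r="\<lambda>x. \<Theta> x * \<alpha>" and s="\<lambda>x. \<Theta> x * \<beta>"])
      fix x assume x: "x \<in> J"
      have e1: "complex_of_real m * (\<Theta> x * \<alpha>) - complex_of_real (V x) * (\<Theta> x * \<beta>) = f x * \<Theta> x * (\<alpha>*\<alpha> - \<beta>*\<beta>)"
        unfolding hm[OF x] hV[OF x] by (simp add: algebra_simps)
      show "((\<lambda>x. 1) has_vector_derivative (complex_of_real m * (\<Theta> x * \<alpha>) - complex_of_real (V x) * (\<Theta> x * \<beta>)) / 4) (at x)"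
        unfolding e1 ab by simp
      show "((\<lambda>x. 0) has_vector_derivative (complex_of_real m * (\<Theta> x * \<beta>) - complex_of_real (V x) * (\<Theta> x * \<alpha>)) / 2) (at x)"
        unfolding hm[OF x] hV[OF x] by (simp add: algebra_simps)
      show "((\<lambda>x. \<Theta> x * \<alpha>) has_vector_derivative complex_of_real m * 1 + complex_of_real (V x) * 0 / 2) (at x)"
        unfolding hm[OF x] by (rule vd_eq[OF has_vector_derivative_mult_left[OF dT[OF x]]]) simp
      show "((\<lambda>x. \<Theta> x * \<beta>) has_vector_derivative complex_of_real (V x) * 1 + complex_of_real m * 0 / 2) (at x)"
        unfolding hV[OF x] by (rule vd_eq[OF has_vector_derivative_mult_left[OF dT[OF x]]]) simp
      have eq2: "1 * 1 - (0 * 0 + \<Theta> x * \<alpha> * (\<Theta> x * \<alpha>) - \<Theta> x * \<beta> * (\<Theta> x * \<beta>)) / 4 = 1 - \<Theta> x * \<Theta> x * (\<alpha>*\<alpha> - \<beta>*\<beta>) / 4"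
        by (simp add: algebra_simps)
      show "1 * 1 - (0 * 0 + \<Theta> x * \<alpha> * (\<Theta> x * \<alpha>) - \<Theta> x * \<beta> * (\<Theta> x * \<beta>)) / 4 \<noteq> 0"
        unfolding eq2 ab by simp
    qed (intro q_mult q_const qT)+
  next
    case False
    define E where "E = (\<lambda>x. exp (\<omega> * \<Theta> x))"
    define F where "F = (\<lambda>x. exp (- (\<omega> * \<Theta> x)))"
    have EF: "E x * F x = 1" for x unfolding E_def F_def by (simp add: exp_minus)
    have dE: "x \<in> J \<Longrightarrow> (E has_vector_derivative \<omega> * f x * E x) (at x)" for x
      unfolding E_def by (rule vd_exp[OF has_vector_derivative_mult_right[OF dT]])
    have dF: "x \<in> J \<Longrightarrow> (F has_vector_derivative - \<omega> * f x * F x) (at x)" for x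
      unfolding F_def by (rule vd_eq[OF vd_exp[OF has_vector_derivative_minus[OF has_vector_derivative_mult_right[OF dT]]]]) (simp_all add: F_def)
    have qE: "quad V J E" unfolding E_def by (intro q_exp q_mult q_const qT)
    have qF: "quad V J F" unfolding F_def
      by (rule q_exp, rule q_cong[where f="\<lambda>x. (- \<omega>) * \<Theta> x"]) (intro q_mult q_const qT, simp)
    show ?thesis
    proof (rule core[OF dir, where p="\<lambda>x. (E x + F x) / 2" and q="\<lambda>x. 0"
          and r="\<lambda>x. (E x - F x) * (\<alpha> / (2*\<omega>))" and s="\<lambda>x. (E x - F x) * (\<beta> / (2*\<omega>))"])
      fix x assume x: "x \<in> J"
      have e1: "complex_of_real m * ((E x - F x) * (\<alpha> / (2*\<omega>))) - complex_of_real (V x) * ((E x - F x) * (\<beta> / (2*\<omega>)))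
          = f x * (E x - F x) * (\<alpha>*\<alpha> - \<beta>*\<beta>) / (2*\<omega>)"
        unfolding hm[OF x] hV[OF x] using False by (simp add: field_simps)
      show "((\<lambda>x. (E x + F x) / 2) has_vector_derivative (complex_of_real m * ((E x - F x) * (\<alpha> / (2*\<omega>))) - complex_of_real (V x) * ((E x - F x) * (\<beta> / (2*\<omega>)))) / 4) (at x)"
        unfolding e1 om
        by (rule vd_eq[OF has_vector_derivative_divide[OF has_vector_derivative_add[OF dE[OF x] dF[OF x]]]]) (use False in \<open>simp add: field_simps\<close>)
      show "((\<lambda>x. 0) has_vector_derivative (complex_of_real m * ((E x - F x) * (\<beta> / (2*\<omega>))) - complex_of_real (V x) * ((E x - F x) * (\<alpha> / (2*\<omega>)))) / 2) (at x)"
        unfolding hm[OF x] hV[OF x] by (simp add: algebra_simps)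
      show "((\<lambda>x. (E x - F x) * (\<alpha> / (2*\<omega>))) has_vector_derivative complex_of_real m * ((E x + F x) / 2) + complex_of_real (V x) * 0 / 2) (at x)"
        unfolding hm[OF x]
        by (rule vd_eq[OF has_vector_derivative_mult_left[OF has_vector_derivative_diff[OF dE[OF x] dF[OF x]]]]) (use False in \<open>simp add: field_simps\<close>)
      show "((\<lambda>x. (E x - F x) * (\<beta> / (2*\<omega>))) has_vector_derivative complex_of_real (V x) * ((E x + F x) / 2) + complex_of_real m * 0 / 2) (at x)"
        unfolding hV[OF x]
        by (rule vd_eq[OF has_vector_derivative_mult_left[OF has_vector_derivative_diff[OF dE[OF x] dF[OF x]]]]) (use False in \<open>simp add: field_simps\<close>)
      have "(E x + F x) / 2 * ((E x + F x) / 2) - (0 * 0 + (E x - F x) * (\<alpha> / (2*\<omega>)) * ((E x - F x) * (\<alpha> / (2*\<omega>)))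
          - (E x - F x) * (\<beta> / (2*\<omega>)) * ((E x - F x) * (\<beta> / (2*\<omega>)))) / 4
        = (E x + F x) * (E x + F x) / 4 - (E x - F x) * (E x - F x) * (\<alpha>*\<alpha> - \<beta>*\<beta>) / (16 * (\<omega> * \<omega>))"
        using False by (simp add: field_simps)
      also have "\<dots> = E x * F x" unfolding om using False by (simp add: field_simps)
      finally show "(E x + F x) / 2 * ((E x + F x) / 2) - (0 * 0 + (E x - F x) * (\<alpha> / (2*\<omega>)) * ((E x - F x) * (\<alpha> / (2*\<omega>)))
          - (E x - F x) * (\<beta> / (2*\<omega>)) * ((E x - F x) * (\<beta> / (2*\<omega>)))) / 4 \<noteq> 0"
        using EF by simp
    next
      show "quad V J (\<lambda>x. (E x + F x) / 2)"
        by (rule q_cong[where f="\<lambda>x. (E x + F x) * (1/2)"]) (intro q_mult q_add q_const qE qF, simp)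
      show "quad V J (\<lambda>x. 0)" by (rule q_const)
      show "quad V J (\<lambda>x. (E x - F x) * (\<alpha> / (2*\<omega>)))"
        by (rule q_cong[where f="\<lambda>x. (E x + F x * (-1)) * (\<alpha> / (2*\<omega>))"]) (intro q_mult q_add q_const qE qF, simp)
      show "quad V J (\<lambda>x. (E x - F x) * (\<beta> / (2*\<omega>)))"
        by (rule q_cong[where f="\<lambda>x. (E x + F x * (-1)) * (\<beta> / (2*\<omega>))"]) (intro q_mult q_add q_const qE qF, simp)
    qed
  qed
qed

lemma quad_mono:
  assumes "quad V I f" "J \<subseteq> I"
  shows "quad V J f"
  using assms
proof (induction rule: quad.induct)
  case (q_const c) then show ?case by (simp add: quad.q_const)
next
  case q_var then show ?case by (simp add: quad.q_var)
next
  case q_V then show ?case by (simp add: quad.q_V)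
next
  case (q_cong f g) then show ?case by (meson quad.q_cong subsetD)
next
  case (q_add f g) then show ?case by (simp add: quad.q_add)
next
  case (q_mult f g) then show ?case by (simp add: quad.q_mult)
next
  case (q_inv f)
  have "quad V J f" using q_inv.IH q_inv.prems .
  moreover have "\<forall>x\<in>J. f x \<noteq> 0" using q_inv.hyps(2) q_inv.prems by blast
  ultimately show ?case by (rule quad.q_inv)
next
  case (q_deriv f g)
  have "quad V J f" using q_deriv.IH q_deriv.prems .
  moreover have "\<forall>x\<in>J. (f has_vector_derivative g x) (at x)" using q_deriv.hyps(2) q_deriv.prems by blast
  ultimately show ?case by (rule quad.q_deriv)
next
  case (q_integral f g)
  have "quad V J f" using q_integral.IH q_integral.prems .
  moreover have "\<forall>x\<in>J. (g has_vector_derivative f x) (at x)" using q_integral.hyps(2) q_integral.prems by blast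
  ultimately show ?case by (rule quad.q_integral)
next
  case (q_exp f) then show ?case by (simp add: quad.q_exp)
next
  case (q_alg cs g)
  have "continuous_on J g" using q_alg.hyps(3) q_alg.prems by (rule continuous_on_subset)
  moreover have "\<forall>k<length cs. quad V J (cs ! k)" using q_alg.IH q_alg.prems by blast
  moreover have "\<forall>x\<in>J. last cs x \<noteq> 0" using q_alg.hyps(2) q_alg.prems by blast
  moreover have "\<forall>x\<in>J. (\<Sum>k<length cs. (cs ! k) x * g x ^ k) = 0" using q_alg.hyps(4) q_alg.prems by blast
  ultimately show ?case using q_alg.hyps(1) by (intro quad.q_alg) auto
qed

lemma antideriv:
  fixes f :: "real \<Rightarrow> complex"
  assumes "c < d" "continuous_on {c<..<d} f"
  shows "\<exists>c' d'. c \<le> c' \<and> c' < d' \<and> d' \<le> d \<and> (\<exists>G. \<forall>x\<in>{c'<..<d'}. (G has_vector_derivative f x) (at x))"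
proof -
  define c' where "c' = c + (d - c)/4"
  define d' where "d' = d - (d - c)/4"
  have sub: "{c'..d'} \<subseteq> {c<..<d}"
  proof
    fix x assume "x \<in> {c'..d'}"
    then have "c' \<le> x" "x \<le> d'" by auto
    have h: "c' = c + (d - c)/4" "d' = d - (d - c)/4" by (simp_all add: c'_def d'_def)
    have pos: "0 < (d - c)/4" using assms(1) by simp
    have "c < x" using h \<open>c' \<le> x\<close> pos by linarith
    moreover have "x < d" using h \<open>x \<le> d'\<close> pos by linarith
    ultimately show "x \<in> {c<..<d}" by simp
  qed
  have cont: "continuous_on {c'..d'} f" using continuous_on_subset[OF assms(2) sub] .
  have "\<forall>x\<in>{c'<..<d'}. ((\<lambda>u. integral {c'..u} f) has_vector_derivative f x) (at x)"
  proof
    fix x assume x: "x \<in> {c'<..<d'}"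
    have "((\<lambda>u. integral {c'..u} f) has_vector_derivative f x) (at x within {c'..d'})"
      using integral_has_vector_derivative[OF cont] x by auto
    then have "((\<lambda>u. integral {c'..u} f) has_vector_derivative f x) (at x within {c'<..<d'})"
      by (rule has_vector_derivative_within_subset) auto
    then show "((\<lambda>u. integral {c'..u} f) has_vector_derivative f x) (at x)"
      using has_vector_derivative_within_open[of x "{c'<..<d'}"] x by auto
  qed
  moreover have "c \<le> c'" "c' < d'" "d' \<le> d"
  proof -
    have pos: "0 < (d - c)/4" using assms(1) by simp
    have "d - (d - c)/4 - (c + (d - c)/4) = (d - c)/2" by (simp add: field_simps)
    moreover have "0 < (d - c)/2" using assms(1) by simp
    ultimately show "c \<le> c'" "c' < d'" "d' \<le> d" using pos unfolding c'_def d'_def by linarith+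
  qed
  ultimately show ?thesis by blast
qed

lemma nonzero_sub:
  fixes f :: "real \<Rightarrow> 'b::real_normed_vector"
  assumes "continuous_on {c<..<d} f" "x0 \<in> {c<..<d}" "f x0 \<noteq> 0"
  shows "\<exists>c' d'. c \<le> c' \<and> c' < d' \<and> d' \<le> d \<and> (\<forall>x\<in>{c'<..<d'}. f x \<noteq> 0)"
proof -
  have "isCont f x0" using assms(1,2) continuous_on_eq_continuous_at[of "{c<..<d}" f] by auto
  then obtain e where e: "e > 0" "\<forall>y. dist x0 y < e \<longrightarrow> f y \<noteq> 0"
    using continuous_at_avoid[of x0 f 0] assms(3) by auto
  define c' where "c' = max c (x0 - e/2)"
  define d' where "d' = min d (x0 + e/2)"
  have "c \<le> c'" "c' < d'" "d' \<le> d"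
  proof -
    have "0 < e/2" using e(1) by simp
    then show "c \<le> c'" "c' < d'" "d' \<le> d" using assms(2) unfolding c'_def d'_def by auto
  qed
  moreover have "\<forall>x\<in>{c'<..<d'}. f x \<noteq> 0"
  proof
    fix x assume "x \<in> {c'<..<d'}"
    have "dist x0 x < e"
    proof -
    from \<open>x \<in> {c'<..<d'}\<close> have "c' < x" "x < d'" by auto
    moreover have "x0 - e/2 \<le> c'" "d' \<le> x0 + e/2" unfolding c'_def d'_def by auto
    moreover have "e/2 < e" using e(1) by simp
    ultimately have "\<bar>x0 - x\<bar> < e" by linarith
    then show "dist x0 x < e" by (simp add: dist_real_def)
    qed
    then show "f x \<noteq> 0" using e(2) by blast
  qed
  ultimately show ?thesis by blast
qed

lemma cont_deriv:
  assumes "\<And>x. x \<in> S \<Longrightarrow> (f has_vector_derivative f' x) (at x)"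
  shows "continuous_on S f"
  by (rule continuous_on_vector_derivative) (rule has_vector_derivative_at_within[OF assms])

lemma eigen_case:
  fixes a b c V :: "real \<Rightarrow> real" and m \<Delta> :: real
  assumes dir: "dirac_matrices \<gamma>" and cd: "c0 < d0"
  and Vc: "continuous_on {c0<..<d0} V"
  and da: "\<And>x. x \<in> {c0<..<d0} \<Longrightarrow> (a has_real_derivative (m * c x - V x * b x)) (at x)"
  and db: "\<And>x. x \<in> {c0<..<d0} \<Longrightarrow> (b has_real_derivative (V x * a x)) (at x)"
  and dc: "\<And>x. x \<in> {c0<..<d0} \<Longrightarrow> (c has_real_derivative (m * a x)) (at x)"
  and nz: "\<And>x. x \<in> {c0<..<d0} \<Longrightarrow> a x + c x \<noteq> 0"
  and inv: "\<And>x. x \<in> {c0<..<d0} \<Longrightarrow> a x * a x + b x * b x - c x * c x = \<Delta>"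
  and qa: "quad V {c0<..<d0} (\<lambda>x. complex_of_real (a x))"
  and qb: "quad V {c0<..<d0} (\<lambda>x. complex_of_real (b x))"
  and qc: "quad V {c0<..<d0} (\<lambda>x. complex_of_real (c x))"
  shows "\<exists>c' d'. c0 \<le> c' \<and> c' < d' \<and> d' \<le> d0 \<and> (\<exists>\<Phi>. (\<forall>i j. quad V {c'<..<d'} (\<lambda>x. \<Phi> x $ i $ j)) \<and>
    (\<forall>x\<in>{c'<..<d'}. (\<Phi> has_vector_derivative ((V x *\<^sub>R J3 \<gamma> + m *\<^sub>R J2 \<gamma>) ** \<Phi> x)) (at x) \<and> det (\<Phi> x) \<noteq> 0))"
proof -
  define I where "I = {c0<..<d0}"
  define \<mu> where "\<mu> = csqrt (complex_of_real \<Delta>) / 2"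
  define M where "M = complex_of_real m"
  define A where "A = (\<lambda>x. complex_of_real (a x))"
  define B where "B = (\<lambda>x. complex_of_real (b x))"
  define C where "C = (\<lambda>x. complex_of_real (c x))"
  define W where "W = (\<lambda>x. complex_of_real (V x))"
  have mu: "4 * (\<mu> * \<mu>) = complex_of_real \<Delta>"
    unfolding \<mu>_def by (simp add: power2_eq_square[symmetric] power_divide)
  have invc: "x \<in> I \<Longrightarrow> 4 * (\<mu> * \<mu>) = A x * A x + B x * B x - C x * C x" for x
    unfolding mu A_def B_def C_def using inv[of x] by (simp add: I_def flip: of_real_mult of_real_add of_real_diff)
  have nzc: "x \<in> I \<Longrightarrow> A x + C x \<noteq> 0" for x
    unfolding A_def C_def using nz[of x] by (simp add: I_def flip: of_real_add)
  have nzc2: "x \<in> I \<Longrightarrow> A x * 2 + C x * 2 \<noteq> 0" "x \<in> I \<Longrightarrow> 2 * A x + 2 * C x \<noteq> 0" for x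
  proof -
    assume x: "x \<in> I"
    have e: "A x * 2 + C x * 2 = (A x + C x) * 2" by (rule distrib_right[symmetric])
    show "A x * 2 + C x * 2 \<noteq> 0" using nzc[OF x] e mult_eq_0_iff[of "A x + C x" "2::complex"] by (metis zero_neq_numeral)
  next
    assume x: "x \<in> I"
    have e: "2 * A x + 2 * C x = 2 * (A x + C x)" by (rule distrib_left[symmetric])
    show "2 * A x + 2 * C x \<noteq> 0" using nzc[OF x] e mult_eq_0_iff[of "2::complex" "A x + C x"] by (metis zero_neq_numeral)
  qed
  have dA: "x \<in> I \<Longrightarrow> (A has_vector_derivative (M * C x - W x * B x)) (at x)" for x
    unfolding A_def M_def C_def W_def B_def using has_vector_derivative_of_real[OF da[of x]] by (simp add: I_def)
  have dB: "x \<in> I \<Longrightarrow> (B has_vector_derivative (W x * A x)) (at x)" for x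
    unfolding A_def B_def W_def using has_vector_derivative_of_real[OF db[of x]] by (simp add: I_def)
  have dC: "x \<in> I \<Longrightarrow> (C has_vector_derivative (M * A x)) (at x)" for x
    unfolding A_def M_def C_def using has_vector_derivative_of_real[OF dc[of x]] by (simp add: I_def)
  have cA: "continuous_on I A" by (rule cont_deriv, rule dA)
  have cB: "continuous_on I B" by (rule cont_deriv, rule dB)
  have cC: "continuous_on I C" by (rule cont_deriv, rule dC)
  have cW: "continuous_on I W" unfolding W_def I_def using Vc by simp
  define Q where "Q = (\<lambda>x. inverse (A x + C x))"
  have QAC: "x \<in> I \<Longrightarrow> Q x * (A x + C x) = 1" for x unfolding Q_def using nzc[of x] by simp
  define g where "g = (\<lambda>x. - M / 2 + W x * (2 * \<mu> + B x) * Q x / 2)"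
  have cQ: "continuous_on I Q" unfolding Q_def
    by (intro continuous_intros cA cC) (use nzc in simp)
  have cg: "continuous_on I g" unfolding g_def
    by (intro continuous_intros cA cB cC cW cQ) simp
  obtain c1 d1 G where c1: "c0 \<le> c1" "c1 < d1" "d1 \<le> d0"
    and dG: "\<forall>x\<in>{c1<..<d1}. (G has_vector_derivative g x) (at x)"
    using antideriv[OF cd cg[unfolded I_def]] by blast
  define I1 where "I1 = {c1<..<d1}"
  have I1I: "I1 \<subseteq> I" unfolding I1_def I_def using c1 by auto
  define h where "h = (\<lambda>x. exp (G x))"
  define u1 where "u1 = (\<lambda>x. h x * (A x + C x))"
  define u2 where "u2 = (\<lambda>x. h x * (2 * \<mu> - B x))"
  have dh: "x \<in> I1 \<Longrightarrow> (h has_vector_derivative (g x * h x)) (at x)" for x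
    unfolding h_def using vd_exp[of G "g x" x] dG I1_def by auto
  have hnz: "h x \<noteq> 0" for x unfolding h_def by simp
  have u1nz: "x \<in> I1 \<Longrightarrow> u1 x \<noteq> 0" for x unfolding u1_def using hnz nzc I1I by auto
  have du1: "(u1 has_vector_derivative ((M * u1 x + W x * u2 x)/2)) (at x)" if x: "x \<in> I1" for x
  proof -
    have x': "x \<in> I" using x I1I by auto
    have "(u1 has_vector_derivative (h x * ((M * C x - W x * B x) + M * A x) + g x * h x * (A x + C x))) (at x)"
      unfolding u1_def by (intro has_vector_derivative_mult has_vector_derivative_add dh x dA dC x')
    moreover have "h x * ((M * C x - W x * B x) + M * A x) + g x * h x * (A x + C x) = (M * u1 x + W x * u2 x)/2"
      using QAC[OF x'] unfolding g_def u1_def u2_def by algebra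
    ultimately show ?thesis by simp
  qed
  have du2: "(u2 has_vector_derivative ((- W x * u1 x - M * u2 x)/2)) (at x)" if x: "x \<in> I1" for x
  proof -
    have x': "x \<in> I" using x I1I by auto
    have "(u2 has_vector_derivative (h x * (0 - W x * A x) + g x * h x * (2 * \<mu> - B x))) (at x)"
      unfolding u2_def by (intro has_vector_derivative_mult has_vector_derivative_diff dh x dB x' has_vector_derivative_const)
    moreover have "h x * (0 - W x * A x) + g x * h x * (2 * \<mu> - B x) = (- W x * u1 x - M * u2 x)/2"
      using QAC[OF x'] invc[OF x'] unfolding g_def u1_def u2_def by algebra
    ultimately show ?thesis by (rule vd_eq)
  qed
  have cu1: "continuous_on I1 u1" by (rule cont_deriv, rule du1)
  define k where "k = (\<lambda>x. W x / (2 * (u1 x * u1 x)))"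
  have ck: "continuous_on I1 k" unfolding k_def
    by (intro continuous_intros cu1 continuous_on_subset[OF cW I1I]) (use u1nz in auto)
  obtain c2 d2 U where c2: "c1 \<le> c2" "c2 < d2" "d2 \<le> d1"
    and dU: "\<forall>x\<in>{c2<..<d2}. (U has_vector_derivative k x) (at x)"
    using antideriv[OF c1(2) ck[unfolded I1_def]] by blast
  define I2 where "I2 = {c2<..<d2}"
  have I2I1: "I2 \<subseteq> I1" unfolding I1_def I2_def using c2 by auto
  define w1 where "w1 = (\<lambda>x. U x * u1 x)"
  define w2 where "w2 = (\<lambda>x. U x * u2 x + inverse (u1 x))"
  have "\<exists>\<Phi>. (\<forall>i j. quad V I2 (\<lambda>x. \<Phi> x $ i $ j)) \<and>
    (\<forall>x\<in>I2. (\<Phi> has_vector_derivative ((V x *\<^sub>R J3 \<gamma> + m *\<^sub>R J2 \<gamma>) ** \<Phi> x)) (at x) \<and> det (\<Phi> x) \<noteq> 0)"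
  proof (rule core2[OF dir, where pa=u1 and pb=u2 and qa=w1 and qb=w2])
    fix x assume x: "x \<in> I2"
    have x1: "x \<in> I1" using x I2I1 by auto
    show "(u1 has_vector_derivative (complex_of_real m * u1 x + complex_of_real (V x) * u2 x) / 2) (at x)"
      using du1[OF x1] by (simp add: M_def W_def)
    show "(u2 has_vector_derivative (- complex_of_real (V x) * u1 x - complex_of_real m * u2 x) / 2) (at x)"
      using du2[OF x1] by (simp add: M_def W_def)
    have dUx: "(U has_vector_derivative k x) (at x)" using dU x I2_def by auto
    show "(w1 has_vector_derivative (complex_of_real m * w1 x + complex_of_real (V x) * w2 x) / 2) (at x)"
      unfolding w1_def
      by (rule vd_eq[OF has_vector_derivative_mult[OF dUx du1[OF x1]]])
        (use u1nz[OF x1] in \<open>simp add: w1_def w2_def k_def M_def W_def field_simps\<close>)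
    show "(w2 has_vector_derivative (- complex_of_real (V x) * w1 x - complex_of_real m * w2 x) / 2) (at x)"
      unfolding w2_def
      by (rule vd_eq[OF has_vector_derivative_add[OF has_vector_derivative_mult[OF dUx du2[OF x1]] vd_inverse[OF du1[OF x1] u1nz[OF x1]]]])
        (use u1nz[OF x1] in \<open>simp add: w1_def w2_def k_def M_def W_def field_simps\<close>)
    show "u1 x * w2 x - w1 x * u2 x \<noteq> 0"
      using u1nz[OF x1] by (simp add: w1_def w2_def field_simps)
  next
    have I2I: "I2 \<subseteq> I" using I2I1 I1I by auto
    have qA: "quad V I2 A" unfolding A_def using quad_mono[OF qa] I2I I_def by simp
    have qB: "quad V I2 B" unfolding B_def using quad_mono[OF qb] I2I I_def by simp
    have qC: "quad V I2 C" unfolding C_def using quad_mono[OF qc] I2I I_def by simp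
    have qW: "quad V I2 W" unfolding W_def by (rule q_V)
    have qg: "quad V I2 g"
    proof (rule q_cong[where f="\<lambda>x. - M / 2 + (W x * (2 * \<mu> + B x)) * Q x * (1/2)"])
      show "quad V I2 (\<lambda>x. - M / 2 + (W x * (2 * \<mu> + B x)) * Q x * (1/2))"
        unfolding Q_def by (intro q_add q_mult q_inv q_const qA qB qC qW) (use nzc I2I in auto)
      show "\<forall>x\<in>I2. g x = - M / 2 + W x * (2 * \<mu> + B x) * Q x * (1/2)"
        by (simp add: g_def)
    qed
    have qG: "quad V I2 G"
      by (rule q_integral[OF qg]) (use dG I2I1 I1_def in auto)
    have qh: "quad V I2 h" unfolding h_def by (intro q_exp qG)
    show qu1: "quad V I2 u1" unfolding u1_def by (intro q_mult q_add qh qA qC)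
    show qu2: "quad V I2 u2" unfolding u2_def
      by (rule q_cong[where f="\<lambda>x. h x * (2 * \<mu> + B x * (-1))"]) (intro q_mult q_add q_const qh qB, simp)
    have qk: "quad V I2 k"
      by (rule q_cong[where f="\<lambda>x. W x * inverse (u1 x * u1 x * 2)"])
        (intro q_mult q_inv q_const qW qu1, use u1nz I2I1 in auto, simp add: k_def field_simps)
    have qU: "quad V I2 U"
      by (rule q_integral[OF qk]) (use dU I2_def in auto)
    show "quad V I2 w1" unfolding w1_def by (intro q_mult qU qu1)
    show "quad V I2 w2" unfolding w2_def
      by (intro q_add q_mult q_inv qU qu1 qu2) (use u1nz I2I1 in auto)
  qed
  then show ?thesis using c1 c2 unfolding I2_def by (meson order_trans)
qed

fun Cn :: "nat \<Rightarrow> (real \<Rightarrow> real) \<Rightarrow> bool" where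
  "Cn 0 f = (\<forall>x. f differentiable (at x))"
| "Cn (Suc n) f = ((\<forall>x. f differentiable (at x)) \<and> Cn n (deriv f))"

lemma Cn_diff: "Cn n f \<Longrightarrow> f differentiable (at x)"
  by (cases n) auto

lemma Cn_deriv: "Cn (Suc n) f \<Longrightarrow> Cn n (deriv f)"
  by simp

lemma Cn_mono: "Cn (Suc n) f \<Longrightarrow> Cn n f"
proof (induction n arbitrary: f)
  case 0 then show ?case by simp
next
  case (Suc n) then show ?case by simp
qed

lemma Cn_from_funpow:
  assumes "\<forall>k x. (deriv ^^ k) f differentiable (at x)"
  shows "Cn n f"
  using assms
proof (induction n arbitrary: f)
  case 0 then show ?case by (metis Cn.simps(1) funpow_0)
next
  case (Suc n)
  have "\<forall>k x. (deriv ^^ k) (deriv f) differentiable (at x)"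
  proof (intro allI)
    fix k x
    have "(deriv ^^ k) (deriv f) = (deriv ^^ Suc k) f" by (simp only: funpow_Suc_right o_def)
    then show "(deriv ^^ k) (deriv f) differentiable (at x)" using Suc.prems by metis
  qed
  then have "Cn n (deriv f)" by (rule Suc.IH)
  moreover have "\<forall>x. f differentiable (at x)" using Suc.prems by (metis funpow_0)
  ultimately show ?case by simp
qed

lemma hasd: "f differentiable (at x) \<Longrightarrow> (f has_real_derivative deriv f x) (at x)"
  using DERIV_deriv_iff_real_differentiable by blast

lemma deriv_add_fun:
  fixes f g :: "real \<Rightarrow> real"
  assumes "\<forall>x. f differentiable (at x)" "\<forall>x. g differentiable (at x)"
  shows "deriv (\<lambda>x. f x + g x) = (\<lambda>x. deriv f x + deriv g x)"
proof
  fix x show "deriv (\<lambda>x. f x + g x) x = deriv f x + deriv g x"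
    by (rule DERIV_imp_deriv, rule DERIV_add[OF hasd hasd]) (use assms in auto)
qed

lemma deriv_mult_fun:
  fixes f g :: "real \<Rightarrow> real"
  assumes "\<forall>x. f differentiable (at x)" "\<forall>x. g differentiable (at x)"
  shows "deriv (\<lambda>x. f x * g x) = (\<lambda>x. deriv f x * g x + f x * deriv g x)"
proof
  fix x show "deriv (\<lambda>x. f x * g x) x = deriv f x * g x + f x * deriv g x"
  proof -
    have h: "((\<lambda>x. f x * g x) has_real_derivative (f x * deriv g x + deriv f x * g x)) (at x)"
      by (rule DERIV_mult'[OF hasd hasd]) (use assms in auto)
    show ?thesis using DERIV_imp_deriv[OF h] by (simp add: algebra_simps)
  qed
qed

lemma Cn_add: "Cn n f \<Longrightarrow> Cn n g \<Longrightarrow> Cn n (\<lambda>x. f x + g x)"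
proof (induction n arbitrary: f g)
  case 0 then show ?case by auto
next
  case (Suc n)
  have df: "\<forall>x. f differentiable (at x)" and dg: "\<forall>x. g differentiable (at x)"
    using Suc.prems by auto
  have "Cn n (\<lambda>x. deriv f x + deriv g x)" using Suc by simp
  then show ?case using df dg by (simp add: deriv_add_fun)
qed

lemma Cn_mult: "Cn n f \<Longrightarrow> Cn n g \<Longrightarrow> Cn n (\<lambda>x. f x * g x)"
proof (induction n arbitrary: f g)
  case 0 then show ?case by auto
next
  case (Suc n)
  have df: "\<forall>x. f differentiable (at x)" and dg: "\<forall>x. g differentiable (at x)"
    using Suc.prems by auto
  have "Cn n (\<lambda>x. deriv f x * g x)" using Suc.IH Suc.prems Cn_mono by simp
  moreover have "Cn n (\<lambda>x. f x * deriv g x)" using Suc.IH Suc.prems Cn_mono by simp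
  ultimately have "Cn n (\<lambda>x. deriv f x * g x + f x * deriv g x)" by (rule Cn_add)
  then show ?case using df dg by (simp add: deriv_mult_fun)
qed

lemma Cn_antider:
  assumes "\<forall>x. (W has_real_derivative h x) (at x)" "Cn n h"
  shows "Cn (Suc n) W"
proof -
  have "deriv W = h" using assms(1) DERIV_imp_deriv by blast
  moreover have "\<forall>x. W differentiable (at x)" using assms(1) real_differentiable_def by blast
  ultimately show ?thesis using assms(2) by simp
qed

lemma quad_sum:
  assumes "finite A" "\<And>i. i \<in> A \<Longrightarrow> quad V J (f i)"
  shows "quad V J (\<lambda>x. \<Sum>i\<in>A. f i x)"
  using assms
proof (induction A rule: finite_induct)
  case empty then show ?case by (simp add: q_const)
next
  case (insert a A) then show ?case by (simp add: q_add)
qed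

lemma quad_real_deriv:
  assumes "quad V J (\<lambda>x. complex_of_real (f x))" "\<forall>x. f differentiable (at x)"
  shows "quad V J (\<lambda>x. complex_of_real (deriv f x))"
  by (rule q_deriv[OF assms(1)]) (use assms(2) hasd has_vector_derivative_of_real in blast)

lemma deriv_zero_on:
  fixes f :: "real \<Rightarrow> real"
  assumes "(f has_real_derivative D) (at x)" "open S" "x \<in> S" "\<And>y. y \<in> S \<Longrightarrow> f y = 0"
  shows "D = 0"
proof -
  have "((\<lambda>y. 0) has_real_derivative D) (at x)"
    by (rule has_field_derivative_transform_within_open[OF assms(1,2,3)]) (use assms(4) in auto)
  then show ?thesis using DERIV_const DERIV_unique by blast
qed

lemma const_on:
  fixes f :: "real \<Rightarrow> real"
  assumes "\<And>x. x \<in> {c<..<d} \<Longrightarrow> (f has_real_derivative 0) (at x)" "x0 \<in> {c<..<d}" "x \<in> {c<..<d}"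
  shows "f x = f x0"
proof -
  obtain k where "\<forall>x\<in>{c<..<d}. f x = k"
    using has_field_derivative_zero_constant[of "{c<..<d}" f] assms(1)
    by (metis convex_real_interval(8) has_field_derivative_at_within)
  then show ?thesis using assms(2,3) by auto
qed

lemma q_recur:
  fixes C :: "nat \<Rightarrow> real" and N j :: nat and t :: real
  defines "q \<equiv> \<lambda>j. \<Sum>k\<in>{Suc j..Suc N}. C k * t ^ (k - Suc j)"
  assumes "j \<le> N"
  shows "q j = C (Suc j) + t * q (Suc j)"
proof -
  have "q j = C (Suc j) * t ^ 0 + (\<Sum>k\<in>{Suc (Suc j)..Suc N}. C k * t ^ (k - Suc j))"
    unfolding q_def using assms(2) by (subst sum.atLeast_Suc_atMost) auto
  also have "(\<Sum>k\<in>{Suc (Suc j)..Suc N}. C k * t ^ (k - Suc j)) = (\<Sum>k\<in>{Suc (Suc j)..Suc N}. t * (C k * t ^ (k - Suc (Suc j))))"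
  proof (rule sum.cong)
    fix k assume "k \<in> {Suc (Suc j)..Suc N}"
    then have "k - Suc j = Suc (k - Suc (Suc j))" by auto
    then show "C k * t ^ (k - Suc j) = t * (C k * t ^ (k - Suc (Suc j)))" by simp
  qed simp
  also have "\<dots> = t * q (Suc j)" unfolding q_def by (simp only: sum_distrib_left)
  finally show ?thesis by simp
qed

lemma poly_identity:
  fixes C s :: "nat \<Rightarrow> real" and N :: nat and t :: real
  defines "q \<equiv> \<lambda>j. \<Sum>k\<in>{Suc j..Suc N}. C k * t ^ (k - Suc j)"
  shows "(\<Sum>j\<le>N. q j * s (Suc j)) + (C 0 + t * q 0) * s 0 = t * (\<Sum>j\<le>N. q j * s j) + (\<Sum>k\<le>Suc N. C k * s k)"
proof -
  have qN: "q (Suc N) = 0" unfolding q_def by simp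
  have rec: "j \<le> N \<Longrightarrow> q j = C (Suc j) + t * q (Suc j)" for j
    unfolding q_def by (rule q_recur[of j N C t, unfolded atomize_eq]) 
  have "(\<Sum>j\<le>N. q j * s (Suc j)) = (\<Sum>j\<le>N. C (Suc j) * s (Suc j) + t * (q (Suc j) * s (Suc j)))"
    by (rule sum.cong) (simp_all add: rec algebra_simps)
  also have "\<dots> = (\<Sum>j\<le>N. C (Suc j) * s (Suc j)) + t * (\<Sum>j\<le>N. q (Suc j) * s (Suc j))"
    by (simp only: sum.distrib sum_distrib_left)
  also have "(\<Sum>j\<le>N. q (Suc j) * s (Suc j)) = (\<Sum>j\<le>Suc N. q j * s j) - q 0 * s 0"
    using sum.atMost_Suc_shift[of "\<lambda>j. q j * s j" N] by simp
  also have "(\<Sum>j\<le>Suc N. q j * s j) = (\<Sum>j\<le>N. q j * s j)" by (simp add: qN)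
  also have "(\<Sum>j\<le>N. C (Suc j) * s (Suc j)) = (\<Sum>k\<le>Suc N. C k * s k) - C 0 * s 0"
    using sum.atMost_Suc_shift[of "\<lambda>j. C j * s j" N] by simp
  finally show ?thesis by (simp add: algebra_simps)
qed


lemma poly_identity2:
  fixes C s q :: "nat \<Rightarrow> real" and N :: nat and t :: real
  assumes "q = (\<lambda>j. \<Sum>k\<in>{Suc j..Suc N}. C k * t ^ (k - Suc j))"
  shows "(\<Sum>j\<le>N. q j * s (Suc j)) + (C 0 + t * q 0) * s 0 = t * (\<Sum>j\<le>N. q j * s j) + (\<Sum>k\<le>Suc N. C k * s k)"
  unfolding assms by (rule poly_identity)

lemma rd_eq: "(f has_real_derivative D') F \<Longrightarrow> D' = D \<Longrightarrow> (f has_real_derivative D) F"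
  by simp

definition goodI :: "(nat \<Rightarrow> complex^4^4) \<Rightarrow> (real \<Rightarrow> real) \<Rightarrow> real \<Rightarrow> real \<Rightarrow> real \<Rightarrow> bool" where
  "goodI \<gamma> V m c0 d0 \<longleftrightarrow> (\<exists>c d. c0 \<le> c \<and> c < d \<and> d \<le> d0 \<and> (\<exists>\<Phi>. (\<forall>i j. quad V {c<..<d} (\<lambda>x. \<Phi> x $ i $ j)) \<and>
    (\<forall>x\<in>{c<..<d}. (\<Phi> has_vector_derivative ((V x *\<^sub>R J3 \<gamma> + m *\<^sub>R J2 \<gamma>) ** \<Phi> x)) (at x) \<and> det (\<Phi> x) \<noteq> 0)))"

lemma goodI_sub: "c0 \<le> c1 \<Longrightarrow> d1 \<le> d0 \<Longrightarrow> goodI \<gamma> V m c1 d1 \<Longrightarrow> goodI \<gamma> V m c0 d0"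
  unfolding goodI_def by (meson order_trans)

lemma goodI_here: "c0 < d0 \<Longrightarrow> (\<exists>\<Phi>. (\<forall>i j. quad V {c0<..<d0} (\<lambda>x. \<Phi> x $ i $ j)) \<and>
    (\<forall>x\<in>{c0<..<d0}. (\<Phi> has_vector_derivative ((V x *\<^sub>R J3 \<gamma> + m *\<^sub>R J2 \<gamma>) ** \<Phi> x)) (at x) \<and> det (\<Phi> x) \<noteq> 0))
   \<Longrightarrow> goodI \<gamma> V m c0 d0"
  unfolding goodI_def by (intro exI[of _ c0] exI[of _ d0]) auto

lemma good_constV:
  assumes dir: "dirac_matrices \<gamma>" and cd: "c0 < d0" and hv: "\<And>x. x \<in> {c0<..<d0} \<Longrightarrow> V x = v0"
  shows "goodI \<gamma> V m c0 d0"
proof (rule goodI_here[OF cd])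
  show "\<exists>\<Phi>. (\<forall>i j. quad V {c0<..<d0} (\<lambda>x. \<Phi> x $ i $ j)) \<and>
    (\<forall>x\<in>{c0<..<d0}. (\<Phi> has_vector_derivative ((V x *\<^sub>R J3 \<gamma> + m *\<^sub>R J2 \<gamma>) ** \<Phi> x)) (at x) \<and> det (\<Phi> x) \<noteq> 0)"
  proof (rule const_case[OF dir, where \<Theta>="\<lambda>x. complex_of_real x" and f="\<lambda>x. 1" and \<alpha>="complex_of_real m" and \<beta>="complex_of_real v0"])
    fix x assume x: "x \<in> {c0<..<d0}"
    show "((\<lambda>x. complex_of_real x) has_vector_derivative 1) (at x)"
      using has_vector_derivative_of_real[OF DERIV_ident] by simp
    show "complex_of_real m = 1 * complex_of_real m" by simp
    show "complex_of_real (V x) = 1 * complex_of_real v0" using hv[OF x] by simp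
  qed (rule q_var)
qed

lemma good_m0:
  assumes dir: "dirac_matrices \<gamma>" and cd: "c0 < d0" and Vc: "continuous_on UNIV V"
  shows "goodI \<gamma> V 0 c0 d0"
proof -
  have "continuous_on {c0<..<d0} (\<lambda>x. complex_of_real (V x))"
    using continuous_on_subset[OF Vc] by simp
  then obtain c1 d1 T where c1: "c0 \<le> c1" "c1 < d1" "d1 \<le> d0"
    and dT: "\<forall>x\<in>{c1<..<d1}. (T has_vector_derivative complex_of_real (V x)) (at x)"
    using antideriv[OF cd] by blast
  have "goodI \<gamma> V 0 c1 d1"
  proof (rule goodI_here[OF c1(2)])
    show "\<exists>\<Phi>. (\<forall>i j. quad V {c1<..<d1} (\<lambda>x. \<Phi> x $ i $ j)) \<and>
      (\<forall>x\<in>{c1<..<d1}. (\<Phi> has_vector_derivative ((V x *\<^sub>R J3 \<gamma> + 0 *\<^sub>R J2 \<gamma>) ** \<Phi> x)) (at x) \<and> det (\<Phi> x) \<noteq> 0)"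
    proof (rule const_case[OF dir, where \<Theta>=T and f="\<lambda>x. complex_of_real (V x)" and \<alpha>=0 and \<beta>=1])
      show "quad V {c1<..<d1} T" by (rule q_integral[OF q_V]) (use dT in auto)
    qed (use dT in auto)
  qed
  then show ?thesis using goodI_sub c1 by blast
qed

theorem theorem1:
  fixes \<gamma> :: "nat \<Rightarrow> complex^4^4" and m :: real and V :: "real \<Rightarrow> real"
    and N :: nat and C :: "nat \<Rightarrow> real"
  assumes "dirac_matrices \<gamma>"
    and "\<forall>k x. (deriv ^^ k) V differentiable (at x)"
    and "\<exists>k\<le>N. C k \<noteq> 0"
    and "\<exists>S. mkdv_symmetries V S \<and> (\<forall>x. (\<Sum>k\<le>N. C k * S k x) = 0)"
  shows "integrable_by_quadratures V (\<lambda>x. V x *\<^sub>R J3 \<gamma> + m *\<^sub>R J2 \<gamma>)"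
proof -
  note dir = assms(1)
  obtain S where mk: "mkdv_symmetries V S" and sumz: "\<forall>x. (\<Sum>k\<le>N. C k * S k x) = 0"
    using assms(4) by blast
  have S0: "S 0 = deriv V" using mk unfolding mkdv_symmetries_def by blast
  have "\<forall>k. \<exists>W. (\<forall>x. (W has_real_derivative (V x * S k x)) (at x)) \<and>
              S (Suc k) = (\<lambda>x. deriv (deriv (S k)) x + (V x)^2 * S k x + deriv V x * W x)"
    using mk unfolding mkdv_symmetries_def by blast
  then obtain Wf where Wf: "\<And>k x. (Wf k has_real_derivative (V x * S k x)) (at x)"
    and SS: "\<And>k. S (Suc k) = (\<lambda>x. deriv (deriv (S k)) x + (V x)^2 * S k x + deriv V x * Wf k x)"
    by metis
  have smV: "\<And>n. Cn n V" using Cn_from_funpow[OF assms(2)] by blast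
  have smW_of: "(\<And>n. Cn n (S k)) \<Longrightarrow> Cn n (Wf k)" for k n
  proof -
    assume h: "\<And>n. Cn n (S k)"
    have "Cn n (\<lambda>x. V x * S k x)" by (rule Cn_mult[OF smV h])
    then have "Cn (Suc n) (Wf k)" by (rule Cn_antider[rotated]) (use Wf in blast)
    then show ?thesis by (rule Cn_mono)
  qed
  have smS: "\<And>n. Cn n (S k)" for k
  proof (induction k)
    case 0
    show ?case unfolding S0 using smV[of "Suc n"] by simp
  next
    case (Suc k)
    have e: "S (Suc k) = (\<lambda>x. deriv (deriv (S k)) x + (V x * V x) * S k x + deriv V x * Wf k x)"
      unfolding SS by (simp add: power2_eq_square)
    have "Cn n (deriv (deriv (S k)))" using Suc.IH[of "Suc (Suc n)"] by simp
    moreover have "Cn n (\<lambda>x. (V x * V x) * S k x)" by (intro Cn_mult smV Suc.IH)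
    moreover have "Cn n (\<lambda>x. deriv V x * Wf k x)"
      by (intro Cn_mult smW_of Suc.IH) (use smV[of "Suc n"] in simp)
    ultimately show ?case unfolding e by (intro Cn_add)
  qed
  have smW: "\<And>n. Cn n (Wf k)" for k using smW_of smS by blast
  have dV: "\<And>x. V differentiable (at x)" using Cn_diff smV by blast
  have dS: "\<And>x. S k differentiable (at x)" for k using Cn_diff smS by blast
  have dS1: "\<And>x. deriv (S k) differentiable (at x)" for k using smS[of "Suc 0" k] by simp
  have dV1: "\<And>x. deriv V differentiable (at x)" using smV[of "Suc 0"] by simp
  have dW: "\<And>x. Wf k differentiable (at x)" for k using Cn_diff smW by blast
  have qS: "quad V J (\<lambda>x. complex_of_real (S k x))" for k J
  proof (induction k)
    case 0
    show ?case unfolding S0 by (rule quad_real_deriv[OF q_V]) (use dV in blast)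
  next
    case (Suc k)
    have q1: "quad V J (\<lambda>x. complex_of_real (deriv (deriv (S k)) x))"
      by (intro quad_real_deriv Suc.IH) (use dS dS1 in blast)+
    have qVS: "quad V J (\<lambda>x. complex_of_real (V x) * complex_of_real (S k x))" by (intro q_mult q_V Suc.IH)
    have qWk: "quad V J (\<lambda>x. complex_of_real (Wf k x))"
      by (rule q_integral[OF qVS]) (use has_vector_derivative_of_real[OF Wf] in auto)
    have qdV: "quad V J (\<lambda>x. complex_of_real (deriv V x))" by (rule quad_real_deriv[OF q_V]) (use dV in blast)
    show ?case
      by (rule q_cong[where f="\<lambda>x. complex_of_real (deriv (deriv (S k)) x) + (complex_of_real (V x) * complex_of_real (V x)) * complex_of_real (S k x)
          + complex_of_real (deriv V x) * complex_of_real (Wf k x)"])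
        (intro q_add q_mult q1 q_V Suc.IH qdV qWk, simp add: SS power2_eq_square)
  qed
  have qW: "quad V J (\<lambda>x. complex_of_real (Wf k x))" for k J
    by (rule q_integral[OF q_mult[OF q_V qS]]) (use has_vector_derivative_of_real[OF Wf] in auto)
  have qdS: "quad V J (\<lambda>x. complex_of_real (deriv (S k) x))" for k J
    by (rule quad_real_deriv[OF qS]) (use dS in blast)
  have Vc: "continuous_on UNIV V"
    by (rule continuous_at_imp_continuous_on) (use dV differentiable_imp_continuous_within in blast)
  have main: "\<forall>C' c0 d0. c0 < d0 \<longrightarrow> C' N' \<noteq> 0 \<longrightarrow> (\<forall>x\<in>{c0<..<d0}. (\<Sum>k\<le>N'. C' k * S k x) = 0)
      \<longrightarrow> goodI \<gamma> V m c0 d0" if mnz: "m \<noteq> 0" for N'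
  proof (induction N')
    case 0
    show ?case
    proof (intro allI impI)
      fix C' :: "nat \<Rightarrow> real" and c0 d0 :: real
      assume cd: "c0 < d0" and CN: "C' 0 \<noteq> 0" and sz: "\<forall>x\<in>{c0<..<d0}. (\<Sum>k\<le>0. C' k * S k x) = 0"
      define xm where "xm = (c0 + d0) / 2"
      have xm: "xm \<in> {c0<..<d0}" using cd by (simp add: xm_def field_simps)
      have d0V: "x \<in> {c0<..<d0} \<Longrightarrow> (V has_real_derivative 0) (at x)" for x
        using hasd[OF dV, of x] sz CN by (simp add: S0)
      have "x \<in> {c0<..<d0} \<Longrightarrow> V x = V xm" for x by (rule const_on[OF d0V xm])
      then show "goodI \<gamma> V m c0 d0" by (rule good_constV[OF dir cd])
    qed
  next
    case (Suc N')
    show ?case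
    proof (intro allI impI)
      fix C' :: "nat \<Rightarrow> real" and c0 d0 :: real
      assume cd: "c0 < d0" and CN: "C' (Suc N') \<noteq> 0" and sz: "\<forall>x\<in>{c0<..<d0}. (\<Sum>k\<le>Suc N'. C' k * S k x) = 0"
      define I where "I = {c0<..<d0}"
      define t where "t = m * m"
      define q where "q = (\<lambda>j. \<Sum>k\<in>{Suc j..Suc N'}. C' k * t ^ (k - Suc j))"
      define a where "a = (\<lambda>x. \<Sum>j\<le>N'. q j * S j x)"
      define a1 where "a1 = (\<lambda>x. \<Sum>j\<le>N'. q j * deriv (S j) x)"
      define a2 where "a2 = (\<lambda>x. \<Sum>j\<le>N'. q j * deriv (deriv (S j)) x)"
      define b where "b = (\<lambda>x. (\<Sum>j\<le>N'. q j * Wf j x) + (C' 0 + t * q 0))"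
      define c where "c = (\<lambda>x. (a1 x + V x * b x) / m)"
      have da: "(a has_real_derivative a1 x) (at x)" for x
        unfolding a_def a1_def by (intro DERIV_sum DERIV_cmult hasd dS)
      have da1: "(a1 has_real_derivative a2 x) (at x)" for x
        unfolding a1_def a2_def by (intro DERIV_sum DERIV_cmult hasd dS1)
      have db: "(b has_real_derivative V x * a x) (at x)" for x
      proof -
        have "(b has_real_derivative (\<Sum>j\<le>N'. q j * (V x * S j x)) + 0) (at x)"
          unfolding b_def by (intro DERIV_add DERIV_sum DERIV_cmult Wf DERIV_const)
        then show ?thesis by (rule rd_eq) (simp add: a_def sum_distrib_left mult_ac)
      qed
      have dc: "(c has_real_derivative (a2 x + (V x * (V x * a x) + deriv V x * b x)) / m) (at x)" for x
        unfolding c_def by (intro DERIV_cdivide DERIV_add da1 DERIV_mult' hasd dV db)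
      have key: "a2 x + V x * (V x * a x) + deriv V x * b x = t * a x" if x: "x \<in> I" for x
      proof -
        have e1: "(\<Sum>j\<le>N'. q j * S (Suc j) x) = a2 x + V x * (V x * a x) + deriv V x * (\<Sum>j\<le>N'. q j * Wf j x)"
          unfolding a2_def a_def by (simp add: SS power2_eq_square sum.distrib sum_distrib_left algebra_simps)
        have e2: "(\<Sum>k\<le>Suc N'. C' k * S k x) = 0" using sz x I_def by auto
        have "(\<Sum>j\<le>N'. q j * S (Suc j) x) + (C' 0 + t * q 0) * S 0 x = t * (\<Sum>j\<le>N'. q j * S j x) + (\<Sum>k\<le>Suc N'. C' k * S k x)"
          by (rule poly_identity2[OF q_def])
        then show ?thesis unfolding e1 e2 by (simp add: b_def a_def S0 algebra_simps)
      qed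
      have dcI: "(c has_real_derivative m * a x) (at x)" if x: "x \<in> I" for x
        using dc[of x] key[OF x] mnz by (simp add: t_def algebra_simps)
      have a1c: "a1 x = m * c x - V x * b x" for x using mnz by (simp add: c_def field_simps)
      have da': "(a has_real_derivative m * c x - V x * b x) (at x)" for x using da[of x] a1c by simp
      define F where "F = (\<lambda>x. a x * a x + b x * b x - c x * c x)"
      have dF: "(F has_real_derivative 0) (at x)" if x: "x \<in> I" for x
      proof -
        have "(F has_real_derivative (a x * (m * c x - V x * b x) + (m * c x - V x * b x) * a x) + (b x * (V x * a x) + V x * a x * b x) - (c x * (m * a x) + m * a x * c x)) (at x)"
          unfolding F_def by (intro DERIV_add DERIV_diff DERIV_mult' da' db dcI x)
        then show ?thesis by (rule rd_eq) (simp add: algebra_simps)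
      qed
      define xm where "xm = (c0 + d0) / 2"
      have xm: "xm \<in> I" using cd by (simp add: xm_def I_def field_simps)
      have Fc: "F x = F xm" if xI: "x \<in> I" for x
      proof -
        have "\<And>y. y \<in> {c0<..<d0} \<Longrightarrow> (F has_real_derivative 0) (at y)" using dF unfolding I_def by blast
        moreover have "xm \<in> {c0<..<d0}" "x \<in> {c0<..<d0}" using xm xI unfolding I_def by auto
        ultimately show ?thesis by (rule const_on)
      qed
      have qa: "quad V J (\<lambda>x. complex_of_real (a x))" for J
        by (rule q_cong[where f="\<lambda>x. \<Sum>j\<le>N'. complex_of_real (q j) * complex_of_real (S j x)"])
          (intro quad_sum q_mult q_const qS, auto simp: a_def)
      have qa1: "quad V J (\<lambda>x. complex_of_real (a1 x))" for J
        by (rule q_cong[where f="\<lambda>x. \<Sum>j\<le>N'. complex_of_real (q j) * complex_of_real (deriv (S j) x)"])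
          (intro quad_sum q_mult q_const qdS, auto simp: a1_def)
      have qb: "quad V J (\<lambda>x. complex_of_real (b x))" for J
        by (rule q_cong[where f="\<lambda>x. (\<Sum>j\<le>N'. complex_of_real (q j) * complex_of_real (Wf j x)) + complex_of_real (C' 0 + t * q 0)"])
          (intro q_add quad_sum q_mult q_const qW, auto simp: b_def)
      have qc: "quad V J (\<lambda>x. complex_of_real (c x))" for J
        by (rule q_cong[where f="\<lambda>x. (complex_of_real (a1 x) + complex_of_real (V x) * complex_of_real (b x)) * complex_of_real (1 / m)"])
          (intro q_add q_mult q_const qa1 qb q_V, auto simp: c_def divide_inverse)
      have cac: "continuous_on I (\<lambda>x. a x + c x)"
        by (rule continuous_at_imp_continuous_on) (use da dc DERIV_isCont isCont_add in blast)
      show "goodI \<gamma> V m c0 d0"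
      proof (cases "\<exists>x0\<in>I. a x0 + c x0 \<noteq> 0")
        case True
        then obtain x0 where x0: "x0 \<in> I" "a x0 + c x0 \<noteq> 0" by blast
        obtain c1 d1 where c1: "c0 \<le> c1" "c1 < d1" "d1 \<le> d0" and nz1: "\<forall>x\<in>{c1<..<d1}. a x + c x \<noteq> 0"
          using nonzero_sub[OF cac[unfolded I_def] x0[unfolded I_def]] by blast
        have sub: "{c1<..<d1} \<subseteq> I" using c1 by (auto simp: I_def)
        have "\<exists>c' d'. c1 \<le> c' \<and> c' < d' \<and> d' \<le> d1 \<and> (\<exists>\<Phi>. (\<forall>i j. quad V {c'<..<d'} (\<lambda>x. \<Phi> x $ i $ j)) \<and>
          (\<forall>x\<in>{c'<..<d'}. (\<Phi> has_vector_derivative ((V x *\<^sub>R J3 \<gamma> + m *\<^sub>R J2 \<gamma>) ** \<Phi> x)) (at x) \<and> det (\<Phi> x) \<noteq> 0))"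
        proof (rule eigen_case[OF dir c1(2), where a=a and b=b and c=c and \<Delta>="F xm"])
          show "continuous_on {c1<..<d1} V" using continuous_on_subset[OF Vc] by simp
          fix x assume x: "x \<in> {c1<..<d1}"
          show "(a has_real_derivative m * c x - V x * b x) (at x)" by (rule da')
          show "(b has_real_derivative V x * a x) (at x)" by (rule db)
          show "(c has_real_derivative m * a x) (at x)" using dcI x sub by blast
          show "a x + c x \<noteq> 0" using nz1 x by blast
          show "a x * a x + b x * b x - c x * c x = F xm" using Fc[of x] x sub by (auto simp: F_def)
        qed (rule qa qb qc)+
        then have "goodI \<gamma> V m c1 d1" unfolding goodI_def .
        then show ?thesis using goodI_sub c1 by blast
      next
        case False
        then have ac0: "\<forall>x\<in>I. a x + c x = 0" by blast
        have Vb0: "V x * b x = 0" if x: "x \<in> I" for x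
        proof -
          have "((\<lambda>x. a x + c x) has_real_derivative a1 x + m * a x) (at x)"
            by (intro DERIV_add da dcI x)
          then have "a1 x + m * a x = 0"
            by (rule deriv_zero_on[where S=I]) (use x ac0 in \<open>auto simp: I_def\<close>)
          then have "V x * b x = m * (a x + c x)" using a1c[of x] by (simp add: algebra_simps)
          then show ?thesis using ac0 x by simp
        qed
        show ?thesis
        proof (cases "\<forall>x\<in>I. V x = 0")
          case True
          then show ?thesis by (intro good_constV[OF dir cd, of V 0]) (auto simp: I_def)
        next
          case False
          then obtain x1 where x1: "x1 \<in> I" "V x1 \<noteq> 0" by blast
          obtain c1 d1 where c1: "c0 \<le> c1" "c1 < d1" "d1 \<le> d0" and nz1: "\<forall>x\<in>{c1<..<d1}. V x \<noteq> 0"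
            using nonzero_sub[OF continuous_on_subset[OF Vc] x1[unfolded I_def]] by auto
          have sub: "{c1<..<d1} \<subseteq> I" using c1 by (auto simp: I_def)
          have b0: "b x = 0" if xx: "x \<in> {c1<..<d1}" for x
          proof -
            have "x \<in> I" using xx sub by blast
            then have "V x * b x = 0" by (rule Vb0)
            moreover have "V x \<noteq> 0" using nz1 xx by blast
            ultimately show ?thesis by simp
          qed
          have a0: "a x = 0" if x: "x \<in> {c1<..<d1}" for x
          proof -
            have "V x * a x = 0" by (rule deriv_zero_on[OF db _ x b0]) simp_all
            then show ?thesis using nz1 x by auto
          qed
          have "goodI \<gamma> V m c1 d1"
          proof (rule Suc.IH[rule_format, of c1 d1 q, OF c1(2)])
            show "q N' \<noteq> 0" using CN by (simp add: q_def)
            show "\<And>x. x \<in> {c1<..<d1} \<Longrightarrow> (\<Sum>k\<le>N'. q k * S k x) = 0" using a0 by (simp add: a_def)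
          qed
          then show ?thesis using goodI_sub c1 by blast
        qed
      qed
    qed
  qed
  have good: "goodI \<gamma> V m a0 b0" if ab: "a0 < b0" for a0 b0
  proof (cases "m = 0")
    case True
    then show ?thesis using good_m0[OF dir ab Vc] by simp
  next
    case False
    define K where "K = Max {k. k \<le> N \<and> C k \<noteq> 0}"
    have fin: "finite {k. k \<le> N \<and> C k \<noteq> 0}" by simp
    have ne: "{k. k \<le> N \<and> C k \<noteq> 0} \<noteq> {}" using assms(3) by auto
    have K: "K \<le> N" "C K \<noteq> 0" using Max_in[OF fin ne] by (auto simp: K_def)
    have big: "C k = 0" if "k \<le> N" "K < k" for k
    proof (rule ccontr)
      assume "C k \<noteq> 0"
      then have "k \<in> {k. k \<le> N \<and> C k \<noteq> 0}" using that by simp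
      then have "k \<le> K" unfolding K_def by (rule Max_ge[OF fin])
      then show False using that by simp
    qed
    have "(\<Sum>k\<le>N. C k * S k x) = (\<Sum>k\<le>K. C k * S k x)" for x
      by (rule sum.mono_neutral_right) (use K big in auto)
    then have "\<forall>x\<in>{a0<..<b0}. (\<Sum>k\<le>K. C k * S k x) = 0" using sumz by simp
    then show ?thesis using main[OF False, of K, rule_format, of a0 b0 C, OF ab K(2)] by simp
  qed
  show ?thesis
    unfolding integrable_by_quadratures_def
  proof (intro allI impI)
    fix a0 b0 :: real assume "a0 < b0"
    from good[OF this] show "\<exists>c d. a0 \<le> c \<and> c < d \<and> d \<le> b0 \<and> (\<exists>\<Phi>. (\<forall>i j. quad V {c<..<d} (\<lambda>x. \<Phi> x $ i $ j)) \<and>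
        (\<forall>x\<in>{c<..<d}. (\<Phi> has_vector_derivative (V x *\<^sub>R J3 \<gamma> + m *\<^sub>R J2 \<gamma>) ** \<Phi> x) (at x) \<and> det (\<Phi> x) \<noteq> 0))"
      unfolding goodI_def .
  qed
qed

end
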